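(* Let $G=(V,E)$ be a finite, simple, connected graph which is locally connected and reflective, and assume $G$ is distance regular with intersection array $(b_0,b_1,\ldots,b_{L-1};c_1=1,\ldots,c_L)$. Then the Ollivier curvature of every edge is $\kappa(x,y)=1+b_0-b_1$. Moreover $G$ is Lichnerowicz sharp, i.e. the smallest positive eigenvalue $\lambda$ of $-\Delta$ satisfies $\lambda=1+b_0-b_1$.
   Context: Locally connected: for every vertex $v$ the subgraph induced on the neighbors of $v$ is connected. $d$ is the combinatorial distance. Distance regular with intersection array $(b_0,\ldots,b_{L-1};c_1,\ldots,c_L)$: $G$ has diameter $L$ and for every $x$ and every $z$ with $d(x,z)=n$, $z$ has $b_n$ neighbors at distance $n+1$ from $x$ and $c_n$ neighbors at distance $n-1$ from $x$ (with the usual convention $b_L=0$). Laplacian $\Delta f(x)=\sum_{y\sim x}(f(y)-f(x))$. Ollivier curvature: $\kappa(x,y)=\inf\{\Delta f(x)-\Delta f(y): f(y)-f(x)=1,\ \max_{u\sim v}|f(u)-f(v)|=1\}$. For adjacent $x\sim y$ let $V_x^y=\{v: d(v,x)<d(v,y)\}$, $V^{xy}=\{v:d(v,x)=d(v,y)\}$. A reflection from $x$ to $y$ is a graph automorphism $\phi$ with $\phi\circ\phi=\mathrm{id}$, $\phi(x)=y$, such that the edges between $V_x^y$ and $V_y^x$ are exactly $\{\{x',\phi(x')\}:x'\in V_x^y\}$ and $\phi$ fixes $V^{xy}$ pointwise. $G$ is reflective if every edge admits a reflection. *)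

theory Defs
  imports Complex_Main
begin

definition simple_graph :: "'a set \<Rightarrow> ('a \<Rightarrow> 'a \<Rightarrow> bool) \<Rightarrow> bool" where
  "simple_graph V E \<longleftrightarrow> finite V \<and> (\<forall>u v. E u v \<longrightarrow> u \<in> V \<and> v \<in> V)
     \<and> (\<forall>u v. E u v \<longrightarrow> E v u) \<and> (\<forall>u. \<not> E u u)"

definition connected_graph :: "'a set \<Rightarrow> ('a \<Rightarrow> 'a \<Rightarrow> bool) \<Rightarrow> bool" where
  "connected_graph V E \<longleftrightarrow> (\<forall>u\<in>V. \<forall>v\<in>V. E\<^sup>*\<^sup>* u v)"

definition gdist :: "('a \<Rightarrow> 'a \<Rightarrow> bool) \<Rightarrow> 'a \<Rightarrow> 'a \<Rightarrow> nat" where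
  "gdist E u v = (LEAST n. (E ^^ n) u v)"

definition nbhd :: "('a \<Rightarrow> 'a \<Rightarrow> bool) \<Rightarrow> 'a \<Rightarrow> 'a set" where
  "nbhd E v = {w. E v w}"

definition locally_connected :: "'a set \<Rightarrow> ('a \<Rightarrow> 'a \<Rightarrow> bool) \<Rightarrow> bool" where
  "locally_connected V E \<longleftrightarrow> (\<forall>v\<in>V. connected_graph (nbhd E v)
      (\<lambda>a b. E a b \<and> a \<in> nbhd E v \<and> b \<in> nbhd E v))"

text \<open>Distance regular with intersection array (b 0, ..., b (L-1); c 1, ..., c L),
  with the convention b L = 0 (forced, as no vertex is at distance L+1).\<close>
definition distance_regular ::
  "'a set \<Rightarrow> ('a \<Rightarrow> 'a \<Rightarrow> bool) \<Rightarrow> nat \<Rightarrow> (nat \<Rightarrow> nat) \<Rightarrow> (nat \<Rightarrow> nat) \<Rightarrow> bool" where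
  "distance_regular V E L b c \<longleftrightarrow>
     L = Max {gdist E x z | x z. x \<in> V \<and> z \<in> V} \<and>
     (\<forall>x\<in>V. \<forall>z\<in>V. \<forall>n. gdist E x z = n \<longrightarrow>
        card {w. E z w \<and> gdist E x w = n + 1} = b n \<and>
        (n \<ge> 1 \<longrightarrow> card {w. E z w \<and> gdist E x w = n - 1} = c n))"

definition laplacian :: "('a \<Rightarrow> 'a \<Rightarrow> bool) \<Rightarrow> ('a \<Rightarrow> real) \<Rightarrow> 'a \<Rightarrow> real" where
  "laplacian E f x = (\<Sum>y\<in>nbhd E x. f y - f x)"

definition ollivier_curvature :: "('a \<Rightarrow> 'a \<Rightarrow> bool) \<Rightarrow> 'a \<Rightarrow> 'a \<Rightarrow> real" where
  "ollivier_curvature E x y = Inf {laplacian E f x - laplacian E f y | f.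
       f y - f x = 1 \<and> Max {\<bar>f u - f v\<bar> | u v. E u v} = 1}"

definition near_side :: "'a set \<Rightarrow> ('a \<Rightarrow> 'a \<Rightarrow> bool) \<Rightarrow> 'a \<Rightarrow> 'a \<Rightarrow> 'a set" where
  "near_side V E x y = {v\<in>V. gdist E v x < gdist E v y}"

definition equi_side :: "'a set \<Rightarrow> ('a \<Rightarrow> 'a \<Rightarrow> bool) \<Rightarrow> 'a \<Rightarrow> 'a \<Rightarrow> 'a set" where
  "equi_side V E x y = {v\<in>V. gdist E v x = gdist E v y}"

definition is_reflection :: "'a set \<Rightarrow> ('a \<Rightarrow> 'a \<Rightarrow> bool) \<Rightarrow> 'a \<Rightarrow> 'a \<Rightarrow> ('a \<Rightarrow> 'a) \<Rightarrow> bool" where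
  "is_reflection V E x y \<phi> \<longleftrightarrow>
     bij_betw \<phi> V V \<and> (\<forall>u\<in>V. \<forall>v\<in>V. E u v \<longleftrightarrow> E (\<phi> u) (\<phi> v)) \<and>
     (\<forall>v\<in>V. \<phi> (\<phi> v) = v) \<and> \<phi> x = y \<and>
     {{u, w} | u w. u \<in> near_side V E x y \<and> w \<in> near_side V E y x \<and> E u w}
       = {{u, \<phi> u} | u. u \<in> near_side V E x y} \<and>
     (\<forall>v\<in>equi_side V E x y. \<phi> v = v)"

definition reflective :: "'a set \<Rightarrow> ('a \<Rightarrow> 'a \<Rightarrow> bool) \<Rightarrow> bool" where
  "reflective V E \<longleftrightarrow> (\<forall>x y. E x y \<longrightarrow> (\<exists>\<phi>. is_reflection V E x y \<phi>))"

definition neg_lap_eigenvalue :: "'a set \<Rightarrow> ('a \<Rightarrow> 'a \<Rightarrow> bool) \<Rightarrow> real \<Rightarrow> bool" where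
  "neg_lap_eigenvalue V E \<mu> \<longleftrightarrow>
     (\<exists>f. (\<exists>v\<in>V. f v \<noteq> 0) \<and> (\<forall>x\<in>V. - laplacian E f x = \<mu> * f x))"

end

theory Submission
  imports Defs
begin


locale sg =
  fixes V :: "'a set" and E :: "'a \<Rightarrow> 'a \<Rightarrow> bool"
  assumes fin: "finite V" and inV: "E u v \<Longrightarrow> u \<in> V \<and> v \<in> V"
    and sym: "E u v \<Longrightarrow> E v u" and irr: "\<not> E u u"
    and conn: "u \<in> V \<Longrightarrow> v \<in> V \<Longrightarrow> E\<^sup>*\<^sup>* u v"
begin

lemma inV1: "E u v \<Longrightarrow> u \<in> V" and inV2: "E u v \<Longrightarrow> v \<in> V" using inV by auto

lemma pow_sym: "(E ^^ n) u v \<Longrightarrow> (E ^^ n) v u"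
proof (induction n arbitrary: u v)
  case 0 then show ?case by auto
next
  case (Suc n)
  from Suc.prems obtain w where "(E ^^ n) u w" "E w v" by (rule relpowp_Suc_E)
  then show ?case using Suc.IH sym relpowp_Suc_I2 by metis
qed

lemma gdist_sym: "gdist E u v = gdist E v u"
  unfolding gdist_def using pow_sym by metis

lemma ex_path: "u \<in> V \<Longrightarrow> v \<in> V \<Longrightarrow> \<exists>n. (E ^^ n) u v"
  using conn rtranclp_imp_relpowp by metis

lemma gdist_path: "u \<in> V \<Longrightarrow> v \<in> V \<Longrightarrow> (E ^^ gdist E u v) u v"
  unfolding gdist_def using ex_path by (metis LeastI_ex)

lemma gdist_le: "(E ^^ n) u v \<Longrightarrow> gdist E u v \<le> n"
  unfolding gdist_def by (rule Least_le)

lemma gdist_refl[simp]: "gdist E u u = 0"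
  using gdist_le[of 0 u u] by auto

lemma gdist_0: "u \<in> V \<Longrightarrow> v \<in> V \<Longrightarrow> gdist E u v = 0 \<Longrightarrow> u = v"
  using gdist_path[of u v] by auto

lemma gdist_1: "E u v \<Longrightarrow> gdist E u v = 1"
proof -
  assume e: "E u v"
  have "gdist E u v \<le> 1" using gdist_le[of 1 u v] e by auto
  moreover have "gdist E u v \<noteq> 0" using gdist_0 e inV irr by metis
  ultimately show ?thesis by auto
qed

lemma gdist_1D: "u \<in> V \<Longrightarrow> v \<in> V \<Longrightarrow> gdist E u v = 1 \<Longrightarrow> E u v"
  using gdist_path[of u v] by auto

lemma gdist_step: "E u v \<Longrightarrow> w \<in> V \<Longrightarrow> gdist E u w \<le> gdist E v w + 1"
proof -
  assume e: "E u v" and w: "w \<in> V"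
  have "(E ^^ gdist E v w) v w" using gdist_path inV2[OF e] w by auto
  then have "(E ^^ Suc (gdist E v w)) u w" using e relpowp_Suc_I2 by metis
  then show ?thesis using gdist_le by fastforce
qed

lemma gdist_2: "E p q \<Longrightarrow> E q w \<Longrightarrow> gdist E p w \<le> 2"
proof -
  assume "E p q" "E q w"
  then have "(E ^^ Suc (Suc 0)) p w" by (metis relpowp_Suc_I2 relpowp_Suc_0)
  then show ?thesis using gdist_le by (metis numeral_2_eq_2)
qed

lemma gdist_cases2: "E p q \<Longrightarrow> E q w \<Longrightarrow>
   (w = p \<and> gdist E p w = 0) \<or> (E p w \<and> gdist E p w = 1) \<or> (gdist E p w = 2 \<and> w \<noteq> p \<and> \<not> E p w)"
proof -
  assume a: "E p q" "E q w"
  have V: "p \<in> V" "w \<in> V" using a inV by auto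
  have "gdist E p w \<le> 2" using gdist_2 a by auto
  then consider "gdist E p w = 0" | "gdist E p w = 1" | "gdist E p w = 2" by linarith
  then show ?thesis
  proof cases
    case 1 then show ?thesis using gdist_0 V by auto
  next
    case 2 then show ?thesis using gdist_1D V by auto
  next
    case 3 then show ?thesis using gdist_1 by fastforce
  qed
qed


lemma nb_sub: "nbhd E v \<subseteq> V" unfolding nbhd_def using inV by auto
lemma nb_fin: "finite (nbhd E v)" using nb_sub fin finite_subset by metis

lemma edges_fin: "finite {(u,v). E u v}"
  by (rule finite_subset[of _ "V \<times> V"]) (use inV fin in auto)

lemma lip: "Max {\<bar>f u - f v\<bar> | u v. E u v} = (1::real) \<Longrightarrow> E u v \<Longrightarrow> \<bar>f u - f v\<bar> \<le> 1"
proof -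
  assume m: "Max {\<bar>f u - f v\<bar> | u v. E u v} = (1::real)" and e: "E u v"
  have "{\<bar>f u - f v\<bar> | u v. E u v} = (\<lambda>(u,v). \<bar>f u - f v\<bar>) ` {(u,v). E u v}" by auto
  then have "finite {\<bar>f u - f v\<bar> | u v. E u v}" using edges_fin by auto
  then show ?thesis using m e Max_ge by fastforce
qed

end



locale dr = sg +
  fixes b :: "nat \<Rightarrow> nat"
  assumes dreg: "x \<in> V \<Longrightarrow> z \<in> V \<Longrightarrow> card {w. E z w \<and> gdist E x w = gdist E x z + 1} = b (gdist E x z)"
begin

lemma card_nb: "v \<in> V \<Longrightarrow> card (nbhd E v) = b 0"
proof -
  assume v: "v \<in> V"
  have "nbhd E v = {w. E v w \<and> gdist E v w = gdist E v v + 1}"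
    unfolding nbhd_def using gdist_1 by auto
  then show ?thesis using dreg[OF v v] by simp
qed

lemma card_B: "E p q \<Longrightarrow> card {w. E q w \<and> gdist E p w = 2} = b 1"
proof -
  assume e: "E p q"
  have "gdist E p q = 1" using gdist_1 e by auto
  then show ?thesis using dreg[of p q] inV e by (simp add: numeral_2_eq_2)
qed

lemma common: "E p q \<Longrightarrow> b 0 = 1 + card (nbhd E p \<inter> nbhd E q) + b 1"
proof -
  assume e: "E p q"
  let ?C = "nbhd E p \<inter> nbhd E q" and ?B = "{w. E q w \<and> gdist E p w = 2}"
  have eq: "nbhd E q = {p} \<union> ?C \<union> ?B"
  proof
    show "nbhd E q \<subseteq> {p} \<union> ?C \<union> ?B"
    proof
      fix w assume "w \<in> nbhd E q"
      then have "E q w" unfolding nbhd_def by auto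
      then show "w \<in> {p} \<union> ?C \<union> ?B" using gdist_cases2[OF e] unfolding nbhd_def by auto
    qed
    show "{p} \<union> ?C \<union> ?B \<subseteq> nbhd E q" using e sym unfolding nbhd_def by auto
  qed
  have fC: "finite ?C" using nb_fin by auto
  have fB: "finite ?B" using nb_fin[of q] unfolding nbhd_def by (rule finite_subset[rotated]) auto
  have d1: "{p} \<inter> ?C = {}" using irr unfolding nbhd_def by auto
  have d2: "({p} \<union> ?C) \<inter> ?B = {}"
  proof -
    have "w \<notin> ?B" if "w \<in> {p} \<union> ?C" for w
    proof -
      have "gdist E p w \<noteq> 2" using that gdist_1[of p w] unfolding nbhd_def by auto
      then show ?thesis by auto
    qed
    then show ?thesis by blast
  qed
  have "card ({p} \<union> ?C \<union> ?B) = card ({p} \<union> ?C) + card ?B"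
    using fC fB d2 by (intro card_Un_disjoint) auto
  then have "card (nbhd E q) = card ({p} \<union> ?C) + card ?B" using eq by simp
  also have "card ({p} \<union> ?C) = 1 + card ?C" using d1 fC by (subst card_Un_disjoint) auto
  finally show ?thesis using card_nb[of q] card_B[OF e] inV e by simp
qed

lemma sum_ind: "finite A \<Longrightarrow> (\<Sum>w\<in>A. if w \<in> B then (1::real) else 0) = real (card (A \<inter> B))"
  by (simp add: sum.If_cases)

end



locale re = dr +
  fixes x y :: 'a and \<phi> :: "'a \<Rightarrow> 'a"
  assumes exy: "E x y" and rf: "is_reflection V E x y \<phi>"
begin

abbreviation "Vx \<equiv> near_side V E x y"
abbreviation "Vy \<equiv> near_side V E y x"
abbreviation "Q \<equiv> equi_side V E x y"

lemma bij: "bij_betw \<phi> V V" and phiE: "u \<in> V \<Longrightarrow> v \<in> V \<Longrightarrow> E u v \<longleftrightarrow> E (\<phi> u) (\<phi> v)"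
  and inv: "v \<in> V \<Longrightarrow> \<phi> (\<phi> v) = v" and phx: "\<phi> x = y"
  and seteq: "{{u, w} | u w. u \<in> Vx \<and> w \<in> Vy \<and> E u w} = {{u, \<phi> u} | u. u \<in> Vx}"
  and fixQ: "v \<in> Q \<Longrightarrow> \<phi> v = v"
  using rf unfolding is_reflection_def by auto

lemma xV: "x \<in> V" and yV: "y \<in> V" using exy inV by auto

lemma phV: "v \<in> V \<Longrightarrow> \<phi> v \<in> V" using bij bij_betwE by metis

lemma phy: "\<phi> y = x" using inv[OF xV] phx by simp

lemma phE: "E u v \<Longrightarrow> E (\<phi> u) (\<phi> v)" using phiE inV by metis

lemma pow_phi: "(E ^^ n) a c \<Longrightarrow> a \<in> V \<Longrightarrow> (E ^^ n) (\<phi> a) (\<phi> c)"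
proof (induction n arbitrary: a)
  case 0 then show ?case by auto
next
  case (Suc n)
  from Suc.prems(1) obtain w where "E a w" "(E ^^ n) w c" by (rule relpowp_Suc_E2)
  then show ?case using Suc.IH phE inV relpowp_Suc_I2 by metis
qed

lemma gdist_phi: "a \<in> V \<Longrightarrow> c \<in> V \<Longrightarrow> gdist E (\<phi> a) (\<phi> c) = gdist E a c"
proof -
  assume a: "a \<in> V" and c: "c \<in> V"
  have "(E ^^ n) (\<phi> a) (\<phi> c) \<longleftrightarrow> (E ^^ n) a c" for n
    using pow_phi[of n a c] pow_phi[of n "\<phi> a" "\<phi> c"] a c phV inv by auto
  then show ?thesis unfolding gdist_def by simp
qed

lemma disj: "v \<in> Vx \<Longrightarrow> v \<notin> Vy" unfolding near_side_def by auto

lemma Vx_phi: "u \<in> Vx \<Longrightarrow> \<phi> u \<in> Vy"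
proof -
  assume u: "u \<in> Vx"
  then have uV: "u \<in> V" unfolding near_side_def by auto
  have "gdist E (\<phi> u) y = gdist E u x" using gdist_phi[OF uV xV] phx by simp
  moreover have "gdist E (\<phi> u) x = gdist E u y" using gdist_phi[OF uV yV] phy by simp
  ultimately show ?thesis using u phV[OF uV] unfolding near_side_def by auto
qed

lemma Vy_phi: "u \<in> Vy \<Longrightarrow> \<phi> u \<in> Vx"
proof -
  assume u: "u \<in> Vy"
  then have uV: "u \<in> V" unfolding near_side_def by auto
  have "gdist E (\<phi> u) y = gdist E u x" using gdist_phi[OF uV xV] phx by simp
  moreover have "gdist E (\<phi> u) x = gdist E u y" using gdist_phi[OF uV yV] phy by simp
  ultimately show ?thesis using u phV[OF uV] unfolding near_side_def by auto
qed

lemma Vx_edge: "u \<in> Vx \<Longrightarrow> E u (\<phi> u)"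
proof -
  assume u: "u \<in> Vx"
  then have "{u, \<phi> u} \<in> {{u, w} | u w. u \<in> Vx \<and> w \<in> Vy \<and> E u w}" using seteq by auto
  then obtain a c where "{u, \<phi> u} = {a, c}" "E a c" by auto
  then show ?thesis using sym by (auto simp: doubleton_eq_iff)
qed

lemma cross: "v \<in> Vy \<Longrightarrow> w \<in> Vx \<Longrightarrow> E w v \<Longrightarrow> v = \<phi> w"
proof -
  assume v: "v \<in> Vy" and w: "w \<in> Vx" and e: "E w v"
  then have "{w, v} \<in> {{u, \<phi> u} | u. u \<in> Vx}" using seteq[symmetric] by blast
  then obtain u where u: "u \<in> Vx" "{w, v} = {u, \<phi> u}" by auto
  then show ?thesis using disj v by (auto simp: doubleton_eq_iff)
qed

lemma nb_phi: "a \<in> V \<Longrightarrow> \<phi> ` nbhd E a = nbhd E (\<phi> a)"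
proof
  assume a: "a \<in> V"
  show "\<phi> ` nbhd E a \<subseteq> nbhd E (\<phi> a)" using phE unfolding nbhd_def by auto
  show "nbhd E (\<phi> a) \<subseteq> \<phi> ` nbhd E a"
  proof
    fix w assume "w \<in> nbhd E (\<phi> a)"
    then have e: "E (\<phi> a) w" unfolding nbhd_def by auto
    then have "E (\<phi> (\<phi> a)) (\<phi> w)" using phE by auto
    then have "E a (\<phi> w)" using inv a by simp
    moreover have "w = \<phi> (\<phi> w)" using inv inV e by metis
    ultimately show "w \<in> \<phi> ` nbhd E a" unfolding nbhd_def by auto
  qed
qed

lemma inj_phi: "inj_on \<phi> V" using bij bij_betw_def by metis

lemma inj_nb: "inj_on \<phi> (nbhd E a)" using inj_phi nb_sub inj_on_subset by metis

end



context dr begin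
lemma lap_eq: "v \<in> V \<Longrightarrow> laplacian E f v = (\<Sum>w\<in>nbhd E v. f w) - real (b 0) * f v"
  unfolding laplacian_def using card_nb by (simp add: sum_subtractf)
end

context re begin

definition "k0 = 1 + real (b 0) - real (b 1)"

lemma lower:
  assumes f1: "f y - f x = 1" and lipf: "\<And>u v. E u v \<Longrightarrow> \<bar>f u - f v\<bar> \<le> 1"
  shows "k0 \<le> laplacian E f x - laplacian E f y"
proof -
  let ?A = "{w. E x w \<and> gdist E y w = 2}"
  let ?h = "\<lambda>u. (if u = y then -1 else 0) + (if u \<in> ?A then 1 else (0::real))"
  have pw: "f (\<phi> u) - f u \<le> ?h u" if u: "u \<in> nbhd E x" for u
  proof -
    have exu: "E x u" using u unfolding nbhd_def by auto
    have uV: "u \<in> V" using exu inV by auto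
    show ?thesis
    proof (cases "u = y")
      case True then show ?thesis using phy f1 by simp
    next
      case False
      have c: "(u = y \<and> gdist E y u = 0) \<or> (E y u \<and> gdist E y u = 1) \<or> (gdist E y u = 2 \<and> u \<noteq> y \<and> \<not> E y u)"
        using gdist_cases2[OF sym[OF exy] exu] .
      show ?thesis
      proof (cases "u \<in> ?A")
        case True
        then have "gdist E u y = 2" using gdist_sym by auto
        moreover have "gdist E u x = 1" using gdist_1 sym exu by auto
        ultimately have "u \<in> Vx" using uV unfolding near_side_def by auto
        then have "E u (\<phi> u)" by (rule Vx_edge)
        then have "f (\<phi> u) - f u \<le> 1" using lipf[of "\<phi> u" u] sym by auto
        then show ?thesis using True False by simp
      next
        case notA: False
        then have "gdist E y u = 1" using c False exu by auto
        then have "gdist E u y = 1" using gdist_sym by auto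
        moreover have "gdist E u x = 1" using gdist_1 sym exu by auto
        ultimately have "u \<in> Q" using uV unfolding equi_side_def by auto
        then show ?thesis using fixQ notA False by simp
      qed
    qed
  qed
  have fin: "finite (nbhd E x)" by (rule nb_fin)
  have "(\<Sum>u\<in>nbhd E x. f (\<phi> u) - f u) \<le> (\<Sum>u\<in>nbhd E x. ?h u)"
    using pw by (rule sum_mono)
  also have "(\<Sum>u\<in>nbhd E x. ?h u) = -1 + real (card (nbhd E x \<inter> ?A))"
    using fin exy by (simp add: sum.distrib sum.If_cases nbhd_def) (rule arg_cong[where f=card]; auto)
  also have "nbhd E x \<inter> ?A = ?A" unfolding nbhd_def by auto
  also have "card ?A = b 1" using card_B[OF sym[OF exy]] .
  finally have s: "(\<Sum>u\<in>nbhd E x. f (\<phi> u)) - (\<Sum>u\<in>nbhd E x. f u) \<le> -1 + real (b 1)"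
    by (simp add: sum_subtractf)
  have "(\<Sum>u\<in>nbhd E y. f u) = (\<Sum>u\<in>nbhd E x. f (\<phi> u))"
    using sum.reindex[OF inj_nb[of x], of f] nb_phi[OF xV] phx by simp
  moreover have "laplacian E f x = (\<Sum>w\<in>nbhd E x. f w) - real (b 0) * f x" by (rule lap_eq[OF xV])
  moreover have "laplacian E f y = (\<Sum>w\<in>nbhd E y. f w) - real (b 0) * f y" by (rule lap_eq[OF yV])
  moreover have "real (b 0) * f y = real (b 0) * f x + real (b 0)" using f1 by (simp add: algebra_simps)
  ultimately show ?thesis using s unfolding k0_def by linarith
qed

lemma upper:
  defines "f0 \<equiv> \<lambda>v. real (gdist E v x)"
  shows "f0 y - f0 x = 1" and "Max {\<bar>f0 u - f0 v\<bar> | u v. E u v} = 1"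
    and "laplacian E f0 x - laplacian E f0 y = k0"
proof -
  show "f0 y - f0 x = 1" unfolding f0_def using gdist_1[OF sym[OF exy]] by simp
  have "{\<bar>f0 u - f0 v\<bar> | u v. E u v} = (\<lambda>(u,v). \<bar>f0 u - f0 v\<bar>) ` {(u,v). E u v}" by auto
  then have fs: "finite {\<bar>f0 u - f0 v\<bar> | u v. E u v}" using edges_fin by auto
  have le: "\<bar>f0 u - f0 v\<bar> \<le> 1" if "E u v" for u v
    using gdist_step[OF that xV] gdist_step[OF sym[OF that] xV] unfolding f0_def by linarith
  have mem: "1 \<in> {\<bar>f0 u - f0 v\<bar> | u v. E u v}"
  proof -
    have "\<bar>f0 y - f0 x\<bar> = 1" unfolding f0_def using gdist_1[OF sym[OF exy]] by simp
    then show ?thesis using exy sym by fastforce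
  qed
  show "Max {\<bar>f0 u - f0 v\<bar> | u v. E u v} = 1"
    using fs mem le by (intro Max_eqI) auto
  have lx: "laplacian E f0 x = real (b 0)"
  proof -
    have "laplacian E f0 x = (\<Sum>w\<in>nbhd E x. 1)"
      unfolding laplacian_def f0_def
      by (rule sum.cong) (auto simp: nbhd_def gdist_1 sym)
    then show ?thesis using card_nb[OF xV] by simp
  qed
  let ?B = "{w. E y w \<and> gdist E x w = 2}"
  have ly: "laplacian E f0 y = -1 + real (b 1)"
  proof -
    have "laplacian E f0 y = (\<Sum>w\<in>nbhd E y. (if w = x then -1 else 0) + (if w \<in> ?B then 1 else (0::real)))"
      unfolding laplacian_def
    proof (rule sum.cong)
      fix w assume "w \<in> nbhd E y"
      then have e: "E y w" unfolding nbhd_def by auto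
      have g: "gdist E w x = gdist E x w" by (rule gdist_sym)
      show "f0 w - f0 y = (if w = x then -1 else 0) + (if w \<in> ?B then 1 else (0::real))"
        using gdist_cases2[OF exy e] gdist_1[OF sym[OF exy]] e unfolding f0_def g by auto
    qed simp
    also have "\<dots> = -1 + real (card (nbhd E y \<inter> ?B))"
      using nb_fin[of y] sym[OF exy] by (simp add: sum.distrib sum.If_cases nbhd_def) (rule arg_cong[where f=card]; auto)
    also have "nbhd E y \<inter> ?B = ?B" unfolding nbhd_def by auto
    also have "card ?B = b 1" using card_B[OF exy] .
    finally show ?thesis .
  qed
  show "laplacian E f0 x - laplacian E f0 y = k0" using lx ly unfolding k0_def by simp
qed

end



lemma sum_indc: "finite A \<Longrightarrow> (\<Sum>w\<in>A. if w \<in> B then (c::real) else 0) = c * real (card (A \<inter> B))"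
  by (simp add: sum.If_cases Int_def)

context re begin

lemma curv: "ollivier_curvature E x y = k0"
  unfolding ollivier_curvature_def
proof (rule cInf_eq_minimum)
  show "k0 \<in> {laplacian E f x - laplacian E f y | f. f y - f x = 1 \<and> Max {\<bar>f u - f v\<bar> | u v. E u v} = 1}"
    using upper(1,2) upper(3)[symmetric] by (intro CollectI exI[of _ "\<lambda>v. real (gdist E v x)"]) auto
next
  fix s assume "s \<in> {laplacian E f x - laplacian E f y | f. f y - f x = 1 \<and> Max {\<bar>f u - f v\<bar> | u v. E u v} = 1}"
  then obtain f where "s = laplacian E f x - laplacian E f y" "f y - f x = 1" "Max {\<bar>f u - f v\<bar> | u v. E u v} = 1"
    by auto
  moreover have "\<And>u v. E u v \<Longrightarrow> \<bar>f u - f v\<bar> \<le> 1" using lip calculation(3) by blast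
  ultimately show "k0 \<le> s" using lower[of f] by auto
qed

lemma k0_pos: "k0 > 0"
  using common[OF exy] unfolding k0_def by simp

lemma QV: "v \<in> V \<Longrightarrow> v \<notin> Vx \<Longrightarrow> v \<notin> Vy \<Longrightarrow> v \<in> Q"
  unfolding near_side_def equi_side_def by auto

lemma Qdisj: "v \<in> Q \<Longrightarrow> v \<notin> Vx \<and> v \<notin> Vy"
  unfolding near_side_def equi_side_def by auto

lemma pair:
  assumes a: "a \<in> Vx"
  shows "nbhd E a \<inter> Vy = {\<phi> a}" "nbhd E (\<phi> a) \<inter> Vx = {a}"
    "nbhd E a \<inter> Q = nbhd E a \<inter> nbhd E (\<phi> a)" "nbhd E (\<phi> a) \<inter> Q = nbhd E a \<inter> nbhd E (\<phi> a)"
proof -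
  have aV: "a \<in> V" using a unfolding near_side_def by auto
  have e: "E a (\<phi> a)" using Vx_edge[OF a] .
  have pa: "\<phi> a \<in> Vy" using Vx_phi[OF a] .
  show "nbhd E a \<inter> Vy = {\<phi> a}"
  proof
    show "nbhd E a \<inter> Vy \<subseteq> {\<phi> a}"
    proof
      fix w assume w: "w \<in> nbhd E a \<inter> Vy"
      then have "E a w" unfolding nbhd_def by auto
      then have "w = \<phi> a" using cross[of w a] w a by blast
      then show "w \<in> {\<phi> a}" by simp
    qed
    show "{\<phi> a} \<subseteq> nbhd E a \<inter> Vy" using e pa unfolding nbhd_def by simp
  qed
  show "nbhd E (\<phi> a) \<inter> Vx = {a}"
  proof -
    have "w = a" if "w \<in> Vx" "E (\<phi> a) w" for w
    proof -
      have "\<phi> a = \<phi> w" using cross[OF pa that(1) sym[OF that(2)]] .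
      moreover have "w \<in> V" using that(2) inV by auto
      ultimately show ?thesis using inj_phi aV inj_on_eq_iff by metis
    qed
    moreover have "a \<in> nbhd E (\<phi> a)" using sym[OF e] unfolding nbhd_def by simp
    ultimately show ?thesis using a unfolding nbhd_def by blast
  qed
  have c1: "nbhd E a \<inter> Q \<subseteq> nbhd E a \<inter> nbhd E (\<phi> a)"
  proof
    fix w assume w: "w \<in> nbhd E a \<inter> Q"
    then have "E a w" unfolding nbhd_def by auto
    then have "E (\<phi> a) (\<phi> w)" by (rule phE)
    then show "w \<in> nbhd E a \<inter> nbhd E (\<phi> a)" using fixQ w unfolding nbhd_def by auto
  qed
  have c2: "nbhd E a \<inter> nbhd E (\<phi> a) \<subseteq> Q"
  proof
    fix w assume w: "w \<in> nbhd E a \<inter> nbhd E (\<phi> a)"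
    then have e1: "E a w" and e2: "E (\<phi> a) w" unfolding nbhd_def by auto
    have wV: "w \<in> V" using e1 inV by auto
    have "w \<notin> Vy"
    proof
      assume "w \<in> Vy"
      then have "w = \<phi> a" using cross[OF _ a e1] by auto
      then show False using e2 irr by auto
    qed
    moreover have "w \<notin> Vx"
    proof
      assume wx: "w \<in> Vx"
      then have "\<phi> a = \<phi> w" using cross[OF pa wx sym[OF e2]] by auto
      then have "a = w" using inj_phi aV wV inj_on_eq_iff by metis
      then show False using e1 irr by auto
    qed
    ultimately show "w \<in> Q" using QV wV by auto
  qed
  show "nbhd E a \<inter> Q = nbhd E a \<inter> nbhd E (\<phi> a)" using c1 c2 by auto
  have c3: "nbhd E (\<phi> a) \<inter> Q \<subseteq> nbhd E a \<inter> nbhd E (\<phi> a)"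
  proof
    fix w assume w: "w \<in> nbhd E (\<phi> a) \<inter> Q"
    then have "E (\<phi> a) w" unfolding nbhd_def by auto
    then have "E (\<phi> (\<phi> a)) (\<phi> w)" by (rule phE)
    then show "w \<in> nbhd E a \<inter> nbhd E (\<phi> a)" using fixQ w inv[OF aV] unfolding nbhd_def by auto
  qed
  show "nbhd E (\<phi> a) \<inter> Q = nbhd E a \<inter> nbhd E (\<phi> a)" using c2 c3 by auto
qed

lemma common_real: "E p q \<Longrightarrow> real (card (nbhd E p \<inter> nbhd E q)) = real (b 0) - 1 - real (b 1)"
  using common by fastforce

definition "g v = (if v \<in> Vy then 1 else if v \<in> Vx then -1 else (0::real))"

lemma gy: "v \<in> Vy \<Longrightarrow> g v = 1" unfolding g_def by simp
lemma gx: "v \<in> Vx \<Longrightarrow> g v = -1" unfolding g_def using disj by simp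
lemma gq: "v \<in> Q \<Longrightarrow> g v = 0" unfolding g_def using Qdisj by simp

lemma tri: "v \<in> V \<Longrightarrow> (v \<in> Vy \<Longrightarrow> P) \<Longrightarrow> (v \<in> Vx \<Longrightarrow> P) \<Longrightarrow> (v \<in> Q \<Longrightarrow> P) \<Longrightarrow> P"
  using QV by blast

lemma g_phi: "w \<in> V \<Longrightarrow> g (\<phi> w) = - g w"
proof -
  assume w: "w \<in> V"
  show ?thesis
  proof (rule tri[OF w])
    assume "w \<in> Vy" then show ?thesis using gy gx Vy_phi by simp
  next
    assume "w \<in> Vx" then show ?thesis using gy gx Vx_phi by simp
  next
    assume "w \<in> Q" then show ?thesis using gq fixQ by simp
  qed
qed

lemma eig: "v \<in> V \<Longrightarrow> - laplacian E g v = k0 * g v"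
proof -
  assume vV: "v \<in> V"
  have fin: "finite (nbhd E v)" by (rule nb_fin)
  have NV: "w \<in> nbhd E v \<Longrightarrow> w \<in> V" for w using nb_sub by auto
  have neg: "- laplacian E g v = (\<Sum>w\<in>nbhd E v. g v - g w)"
    unfolding laplacian_def by (simp add: sum_negf[symmetric])
  show ?thesis
  proof (rule tri[OF vV])
    assume 1: "v \<in> Vy"
    define a where "a = \<phi> v"
    have a: "a \<in> Vx" unfolding a_def using Vy_phi 1 .
    have pa: "\<phi> a = v" unfolding a_def using inv vV by auto
    have "(\<Sum>w\<in>nbhd E v. g v - g w) = (\<Sum>w\<in>nbhd E v. (if w \<in> Vx then 2 else 0) + (if w \<in> Q then 1 else (0::real)))"
    proof (rule sum.cong)
      fix w assume "w \<in> nbhd E v"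
      then have wV: "w \<in> V" using NV by auto
      have gv: "g v = 1" using gy 1 .
      show "g v - g w = (if w \<in> Vx then 2 else 0) + (if w \<in> Q then 1 else (0::real))"
      proof (rule tri[OF wV])
        assume "w \<in> Vy" then show ?thesis using gv gy disj Qdisj by auto
      next
        assume "w \<in> Vx" then show ?thesis using gv gx disj Qdisj by auto
      next
        assume "w \<in> Q" then show ?thesis using gv gq Qdisj by auto
      qed
    qed simp
    also have "\<dots> = 2 * real (card (nbhd E v \<inter> Vx)) + real (card (nbhd E v \<inter> Q))"
      using fin by (simp add: sum.distrib sum_indc)
    finally have s1: "(\<Sum>w\<in>nbhd E v. g v - g w) = 2 * real (card (nbhd E v \<inter> Vx)) + real (card (nbhd E v \<inter> Q))" .
    have c1: "nbhd E v \<inter> Vx = {a}" using pair(2)[OF a] pa by simp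
    have c2: "nbhd E v \<inter> Q = nbhd E a \<inter> nbhd E (\<phi> a)" using pair(4)[OF a] pa by simp
    have c3: "real (card (nbhd E a \<inter> nbhd E (\<phi> a))) = real (b 0) - 1 - real (b 1)"
      using common_real Vx_edge[OF a] by auto
    have "(\<Sum>w\<in>nbhd E v. g v - g w) = k0" unfolding s1 c1 c2 c3 k0_def by simp
    then show ?thesis using neg gy[OF 1] by simp
  next
    assume 2: "v \<in> Vx"
    have "(\<Sum>w\<in>nbhd E v. g v - g w) = (\<Sum>w\<in>nbhd E v. - ((if w \<in> Vy then 2 else 0) + (if w \<in> Q then 1 else (0::real))))"
    proof (rule sum.cong)
      fix w assume "w \<in> nbhd E v"
      then have wV: "w \<in> V" using NV by auto
      have gv: "g v = -1" using gx 2 .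
      show "g v - g w = - ((if w \<in> Vy then 2 else 0) + (if w \<in> Q then 1 else (0::real)))"
      proof (rule tri[OF wV])
        assume "w \<in> Vy" then show ?thesis using gv gy disj Qdisj by auto
      next
        assume "w \<in> Vx" then show ?thesis using gv gx disj Qdisj by auto
      next
        assume "w \<in> Q" then show ?thesis using gv gq Qdisj by auto
      qed
    qed simp
    also have "\<dots> = - (\<Sum>w\<in>nbhd E v. (if w \<in> Vy then 2 else 0) + (if w \<in> Q then 1 else (0::real)))"
      by (rule sum_negf)
    finally have s0: "(\<Sum>w\<in>nbhd E v. g v - g w) = - (\<Sum>w\<in>nbhd E v. (if w \<in> Vy then 2 else 0) + (if w \<in> Q then 1 else (0::real)))" .
    have s1: "(\<Sum>w\<in>nbhd E v. (if w \<in> Vy then 2 else 0) + (if w \<in> Q then 1 else (0::real)))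
        = 2 * real (card (nbhd E v \<inter> Vy)) + real (card (nbhd E v \<inter> Q))"
      using fin by (simp add: sum.distrib sum_indc)
    have c1: "nbhd E v \<inter> Vy = {\<phi> v}" using pair(1)[OF 2] by simp
    have c2: "nbhd E v \<inter> Q = nbhd E v \<inter> nbhd E (\<phi> v)" using pair(3)[OF 2] by simp
    have c3: "real (card (nbhd E v \<inter> nbhd E (\<phi> v))) = real (b 0) - 1 - real (b 1)"
      using common_real Vx_edge[OF 2] by auto
    have "(\<Sum>w\<in>nbhd E v. g v - g w) = - k0" unfolding s0 s1 c1 c2 c3 k0_def by simp
    then show ?thesis using neg gx[OF 2] by simp
  next
    assume 3: "v \<in> Q"
    have gv: "g v = 0" using gq 3 .
    have pv: "\<phi> v = v" using fixQ 3 by auto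
    have "(\<Sum>w\<in>nbhd E v. g w) = (\<Sum>w\<in>nbhd E v. g (\<phi> w))"
      using sum.reindex[OF inj_nb[of v], of g] nb_phi[OF vV] pv by simp
    also have "\<dots> = (\<Sum>w\<in>nbhd E v. - g w)"
      using NV g_phi by (intro sum.cong) auto
    also have "\<dots> = - (\<Sum>w\<in>nbhd E v. g w)" by (rule sum_negf)
    finally have s0: "(\<Sum>w\<in>nbhd E v. g w) = 0" by simp
    have "(\<Sum>w\<in>nbhd E v. g v - g w) = - (\<Sum>w\<in>nbhd E v. g w)"
      using gv by (simp add: sum_negf)
    then show ?thesis using neg gv s0 by simp
  qed
qed

lemma eigval: "neg_lap_eigenvalue V E k0"
  unfolding neg_lap_eigenvalue_def
proof (intro exI conjI)
  have "y \<in> Vy" using yV gdist_1[OF exy] gdist_sym[of x y] unfolding near_side_def by simp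
  then have "g y = 1" by (rule gy)
  then show "\<exists>v\<in>V. g v \<noteq> 0" using yV by (intro bexI[of _ y]) auto
  show "\<forall>v\<in>V. - laplacian E g v = k0 * g v" using eig by auto
qed

end



context dr begin

lemma lich:
  assumes refl: "\<And>x y. E x y \<Longrightarrow> \<exists>\<phi>. is_reflection V E x y \<phi>"
  assumes mu: "\<mu> > 0" and ev: "neg_lap_eigenvalue V E \<mu>"
  shows "1 + real (b 0) - real (b 1) \<le> \<mu>"
proof -
  from ev obtain f where nz: "\<exists>v\<in>V. f v \<noteq> 0" and fe: "\<forall>v\<in>V. - laplacian E f v = \<mu> * f v"
    unfolding neg_lap_eigenvalue_def by auto
  have "\<exists>u v. E u v \<and> f u \<noteq> f v"
  proof (rule ccontr)
    assume "\<not> ?thesis"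
    then have eq: "E u v \<Longrightarrow> f u = f v" for u v by auto
    have "f v = 0" if "v \<in> V" for v
    proof -
      have "laplacian E f v = 0" unfolding laplacian_def nbhd_def using eq by simp
      then show ?thesis using fe that mu by auto
    qed
    then show False using nz by auto
  qed
  then obtain u0 v0 where e0: "E u0 v0" "f u0 \<noteq> f v0" by auto
  let ?S = "{\<bar>f u - f v\<bar> | u v. E u v}"
  have "?S = (\<lambda>(u,v). \<bar>f u - f v\<bar>) ` {(u,v). E u v}" by auto
  then have fs: "finite ?S" using edges_fin by auto
  have ne: "?S \<noteq> {}" using e0 by auto
  define M where "M = Max ?S"
  have "M \<in> ?S" unfolding M_def using fs ne by (rule Max_in)
  then obtain p0 q0 where pq0: "E p0 q0" "M = \<bar>f p0 - f q0\<bar>" by auto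
  have Mge: "\<bar>f u - f v\<bar> \<le> M" if "E u v" for u v
    unfolding M_def using fs that by (intro Max_ge) auto
  have Mpos: "M > 0" using Mge[OF e0(1)] e0(2) by auto
  obtain p q where pq: "E p q" "f q - f p = M"
  proof (cases "f q0 \<ge> f p0")
    case True
    then have "f q0 - f p0 = M" using pq0(2) by simp
    then show ?thesis using that pq0(1) by blast
  next
    case False
    then have "f p0 - f q0 = M" using pq0(2) by simp
    then show ?thesis using that sym[OF pq0(1)] by blast
  qed
  define h where "h v = f v / M" for v
  have h1: "h q - h p = 1" unfolding h_def using pq Mpos by (simp add: diff_divide_distrib[symmetric])
  have hmax: "Max {\<bar>h u - h v\<bar> | u v. E u v} = 1"
  proof -
    have "{\<bar>h u - h v\<bar> | u v. E u v} = (\<lambda>(u,v). \<bar>h u - h v\<bar>) ` {(u,v). E u v}" by auto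
    then have "finite {\<bar>h u - h v\<bar> | u v. E u v}" using edges_fin by auto
    moreover have "1 \<in> {\<bar>h u - h v\<bar> | u v. E u v}"
    proof -
      have "1 = \<bar>h q - h p\<bar> \<and> E q p" using h1 sym[OF pq(1)] by simp
      then show ?thesis by blast
    qed
    moreover have "\<bar>h u - h v\<bar> \<le> 1" if "E u v" for u v
    proof -
      have "\<bar>h u - h v\<bar> = \<bar>f u - f v\<bar> / M" unfolding h_def using Mpos
        by (simp add: diff_divide_distrib[symmetric])
      then show ?thesis using Mge[OF that] Mpos by simp
    qed
    ultimately show ?thesis by (intro Max_eqI) auto
  qed
  have lh: "laplacian E h v = laplacian E f v / M" for v
    unfolding laplacian_def h_def by (simp add: sum_divide_distrib diff_divide_distrib)
  have pV: "p \<in> V" and qV: "q \<in> V" using pq inV by auto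
  obtain \<psi> where ps: "is_reflection V E p q \<psi>" using refl pq(1) by blast
  interpret R: re V E b p q \<psi> using pq(1) ps by unfold_locales
  have lipf: "\<And>u v. E u v \<Longrightarrow> \<bar>h u - h v\<bar> \<le> 1" using lip hmax by blast
  have k: "R.k0 = 1 + real (b 0) - real (b 1)" by (rule R.k0_def)
  have low: "R.k0 \<le> laplacian E h p - laplacian E h q" using R.lower[OF h1 lipf] .
  have "- laplacian E f p = \<mu> * f p" "- laplacian E f q = \<mu> * f q" using fe pV qV by auto
  then have a1: "laplacian E f p = - (\<mu> * f p)" "laplacian E f q = - (\<mu> * f q)" by linarith+
  have a2: "laplacian E h p = - (\<mu> * h p)" "laplacian E h q = - (\<mu> * h q)"
    unfolding lh h_def a1 by simp_all
  have "laplacian E h p - laplacian E h q = \<mu> * (h q - h p)"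
    unfolding a2 by (simp add: right_diff_distrib)
  also have "\<dots> = \<mu>" using h1 by simp
  finally show ?thesis using low k by linarith
qed

end

theorem theorem2p13:
  fixes V :: "'a set" and E :: "'a \<Rightarrow> 'a \<Rightarrow> bool"
    and L :: nat and b c :: "nat \<Rightarrow> nat"
  assumes "simple_graph V E" and "connected_graph V E" and "card V \<ge> 2"
    and "locally_connected V E" and "reflective V E"
    and "distance_regular V E L b c" and "c 1 = 1"
  shows "(\<forall>x y. E x y \<longrightarrow> ollivier_curvature E x y = 1 + real (b 0) - real (b 1))
     \<and> (1 + real (b 0) - real (b 1) > 0 \<and> neg_lap_eigenvalue V E (1 + real (b 0) - real (b 1))
        \<and> (\<forall>\<mu>. \<mu> > 0 \<and> neg_lap_eigenvalue V E \<mu> \<longrightarrow> 1 + real (b 0) - real (b 1) \<le> \<mu>))"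
proof -
  interpret sg V E
    using assms(1,2) unfolding simple_graph_def connected_graph_def by unfold_locales auto
  interpret dr V E b
  proof
    fix x z assume "x \<in> V" "z \<in> V"
    then show "card {w. E z w \<and> gdist E x w = gdist E x z + 1} = b (gdist E x z)"
      using assms(6) unfolding distance_regular_def by blast
  qed
  have refl: "\<And>x y. E x y \<Longrightarrow> \<exists>\<phi>. is_reflection V E x y \<phi>"
    using assms(5) unfolding reflective_def by blast
  have curvs: "ollivier_curvature E x y = 1 + real (b 0) - real (b 1)" if exy: "E x y" for x y
  proof -
    obtain \<phi> where "is_reflection V E x y \<phi>" using refl exy by blast
    then interpret R: re V E b x y \<phi> using exy by unfold_locales
    show ?thesis using R.curv unfolding R.k0_def .
  qed
  obtain x0 y0 where e0: "E x0 y0"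
  proof -
    from assms(3) obtain u v where uv: "u \<in> V" "v \<in> V" "u \<noteq> v"
    proof -
      have "\<not> (card V \<le> 1)" using assms(3) by auto
      then have "\<exists>u\<in>V. \<exists>v\<in>V. u \<noteq> v" using card_le_Suc0_iff_eq[OF fin] by auto
      then show ?thesis using that by blast
    qed
    have "E\<^sup>*\<^sup>* u v" using conn uv by auto
    then have "\<exists>w. E u w" using uv(3) by (cases rule: converse_rtranclpE) auto
    then show ?thesis using that by blast
  qed
  obtain \<phi> where "is_reflection V E x0 y0 \<phi>" using refl e0 by blast
  then interpret R: re V E b x0 y0 \<phi> using e0 by unfold_locales
  have k: "R.k0 = 1 + real (b 0) - real (b 1)" by (rule R.k0_def)
  have A: "\<forall>x y. E x y \<longrightarrow> ollivier_curvature E x y = 1 + real (b 0) - real (b 1)"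
    using curvs by blast
  have B: "1 + real (b 0) - real (b 1) > 0" using R.k0_pos unfolding k .
  have C: "neg_lap_eigenvalue V E (1 + real (b 0) - real (b 1))" using R.eigval unfolding k .
  have D: "\<forall>\<mu>. \<mu> > 0 \<and> neg_lap_eigenvalue V E \<mu> \<longrightarrow> 1 + real (b 0) - real (b 1) \<le> \<mu>"
    using lich[OF refl] by blast
  show ?thesis using A B C D by blast
qed


end
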